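(* For every network $\mathcal N$ with character $D^*$, the rate region $\mathcal R^{\mathcal N}$ equals the closure of $\bigcup_{T=1}^{\infty}\frac{T}{T+D^*}\,\widetilde{\mathcal R}^{\mathcal N^T}$.
   Context: A network is a triple $\mathcal N=(\mathcal L,\mathcal I,D_{\mathcal L})$ where $\mathcal L$ is a finite nonempty set (of links); $\mathcal I=(\mathcal I(l))_{l\in\mathcal L}$ is the collision profile, each $\mathcal I(l)$ being a collection of nonempty subsets of $\mathcal L$; and $D_{\mathcal L}$ assigns an integer $D_{\mathcal L}(l,l')$ to every pair $(l,l')$ with $l'\in\phi$ for some $\phi\in\mathcal I(l)$. The character is $D^*=\max_{l\in\mathcal L}\max_{\phi\in\mathcal I(l)}\max_{l'\in\phi}|D_{\mathcal L}(l,l')|$ (0 if there are no collision sets). A schedule is a map $S:\mathcal L\times\mathbb Z\to\{0,1\}$; $S(l,t)$ has a collision if there exists $\phi\in\mathcal I(l)$ with $S(l',t+D_{\mathcal L}(l,l'))=1$ for all $l'\in\phi$, otherwise it is collision free. $R_S(l)=\lim_{T\to\infty}\frac1T\sum_{t=0}^{T-1}\iota\big(S(l,t)=1\text{ and collision free}\big)$ when the limit exists; $R_S=(R_S(l))_l$ is the rate vector when all limits exist. A nonnegative vector $R\in[0,\infty)^{\mathcal L}$ is achievable if for every $\epsilon>0$ some schedule $S$ has a rate vector with $R_S(l)\ge R(l)-\epsilon$ for all $l$; $\mathcal R^{\mathcal N}$ is the set of achievable nonnegative vectors. For an integer $T\ge1$, an independent set of $\mathcal N^T$ is a binary $|\mathcal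 L|\times T$ matrix $A$ (columns indexed $0,\dots,T-1$) such that there is no $(l,t)$ and $\phi\in\mathcal I(l)$ with $A(l,t)=1$ and, for every $l'\in\phi$, $0\le t+D_{\mathcal L}(l,l')\le T-1$ and $A(l',t+D_{\mathcal L}(l,l'))=1$. Its rate vector is $\frac1T A\mathbf 1$ (the sum of the columns divided by $T$). $\widetilde{\mathcal R}^{\mathcal N^T}$ is the convex hull of the rate vectors of all independent sets of $\mathcal N^T$. *)

theory Defs
  imports "HOL-Analysis.Analysis"
begin

text \<open>The link set L is the (finite, nonempty) universe of the type 'l.
  I l is the collection of collision sets of link l, D l l' the delay.\<close>

definition network :: "('l::finite \<Rightarrow> 'l set set) \<Rightarrow> bool" where
  "network I \<longleftrightarrow> (\<forall>l. \<forall>\<phi>\<in>I l. \<phi> \<noteq> {})"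

definition character :: "('l::finite \<Rightarrow> 'l set set) \<Rightarrow> ('l \<Rightarrow> 'l \<Rightarrow> int) \<Rightarrow> nat" where
  "character I D = nat (Max ({0} \<union> {\<bar>D l l'\<bar> | l l' \<phi>. \<phi> \<in> I l \<and> l' \<in> \<phi>}))"

definition has_collision ::
  "('l::finite \<Rightarrow> 'l set set) \<Rightarrow> ('l \<Rightarrow> 'l \<Rightarrow> int) \<Rightarrow> ('l \<Rightarrow> int \<Rightarrow> bool) \<Rightarrow> 'l \<Rightarrow> int \<Rightarrow> bool" where
  "has_collision I D S l t \<longleftrightarrow> (\<exists>\<phi>\<in>I l. \<forall>l'\<in>\<phi>. S l' (t + D l l'))"

definition avg_rate ::
  "('l::finite \<Rightarrow> 'l set set) \<Rightarrow> ('l \<Rightarrow> 'l \<Rightarrow> int) \<Rightarrow> ('l \<Rightarrow> int \<Rightarrow> bool) \<Rightarrow> 'l \<Rightarrow> nat \<Rightarrow> real" where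
  "avg_rate I D S l T =
     (\<Sum>t<T. if S l (int t) \<and> \<not> has_collision I D S l (int t) then 1 else 0) / real T"

definition achievable ::
  "('l::finite \<Rightarrow> 'l set set) \<Rightarrow> ('l \<Rightarrow> 'l \<Rightarrow> int) \<Rightarrow> real ^ 'l \<Rightarrow> bool" where
  "achievable I D R \<longleftrightarrow> (\<forall>l. 0 \<le> R $ l) \<and>
     (\<forall>\<epsilon>>0. \<exists>S. (\<forall>l. convergent (avg_rate I D S l)) \<and>
                  (\<forall>l. lim (avg_rate I D S l) \<ge> R $ l - \<epsilon>))"

definition rate_region ::
  "('l::finite \<Rightarrow> 'l set set) \<Rightarrow> ('l \<Rightarrow> 'l \<Rightarrow> int) \<Rightarrow> (real ^ 'l) set" where
  "rate_region I D = {R. achievable I D R}"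

text \<open>Independent sets of N^T: binary matrices indexed by links and columns 0..T-1
  (entries outside the columns 0..T-1 are ignored).\<close>
definition indep_set ::
  "('l::finite \<Rightarrow> 'l set set) \<Rightarrow> ('l \<Rightarrow> 'l \<Rightarrow> int) \<Rightarrow> nat \<Rightarrow> ('l \<Rightarrow> int \<Rightarrow> bool) \<Rightarrow> bool" where
  "indep_set I D T A \<longleftrightarrow>
     \<not> (\<exists>l t \<phi>. 0 \<le> t \<and> t < int T \<and> A l t \<and> \<phi> \<in> I l \<and>
          (\<forall>l'\<in>\<phi>. 0 \<le> t + D l l' \<and> t + D l l' \<le> int T - 1 \<and> A l' (t + D l l')))"

definition indep_rate :: "nat \<Rightarrow> ('l::finite \<Rightarrow> int \<Rightarrow> bool) \<Rightarrow> real ^ 'l" where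
  "indep_rate T A = (\<chi> l. (\<Sum>t\<in>{0..<int T}. if A l t then 1 else 0) / real T)"

definition indep_hull ::
  "('l::finite \<Rightarrow> 'l set set) \<Rightarrow> ('l \<Rightarrow> 'l \<Rightarrow> int) \<Rightarrow> nat \<Rightarrow> (real ^ 'l) set" where
  "indep_hull I D T = convex hull {indep_rate T A | A. indep_set I D T A}"

end

theory Submission
  imports Defs
begin


lemma char_bound:
  fixes I :: "'l::finite \<Rightarrow> 'l set set"
  assumes "\<phi> \<in> I l" "l' \<in> \<phi>"
  shows "\<bar>D l l'\<bar> \<le> int (character I D)"
proof -
  let ?X = "{\<bar>D l l'\<bar> | l l' \<phi>. \<phi> \<in> I l \<and> l' \<in> \<phi>}"
  have "?X \<subseteq> (\<lambda>(a,b). \<bar>D a b\<bar>) ` UNIV" by auto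
  hence fin: "finite ?X" by (rule finite_subset) simp
  have "\<bar>D l l'\<bar> \<le> Max ({0} \<union> ?X)" using fin assms by (intro Max_ge) auto
  moreover have "0 \<le> Max ({0} \<union> ?X)" using fin by (intro Max_ge) auto
  ultimately show ?thesis unfolding character_def by simp
qed

definition blk_sched :: "nat \<Rightarrow> nat \<Rightarrow> nat \<Rightarrow> (nat \<Rightarrow> 'l \<Rightarrow> int \<Rightarrow> bool) \<Rightarrow> 'l \<Rightarrow> int \<Rightarrow> bool" where
  "blk_sched T C N B l t = (t mod int (T+C) < int T \<and>
      B (nat ((t div int (T+C)) mod int N)) l (t mod int (T+C)))"

lemma divmod_int_char:
  fixes t q s P :: int
  assumes "t = q*P + s" "0 \<le> s" "s < P"
  shows "t div P = q \<and> t mod P = s"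
  using assms by (metis add.commute div_pos_pos_trivial mod_pos_pos_trivial div_mult_self3 mod_mult_self3 mult.commute not_less order_le_less_trans add_0)

lemma blk_no_coll:
  fixes I :: "'l::finite \<Rightarrow> 'l set set"
  assumes net: "network I" and T: "T \<ge> 1" and N: "N \<ge> 1"
    and ind: "\<And>j. j < N \<Longrightarrow> indep_set I D T (B j)"
    and S: "S = blk_sched T (character I D) N B"
    and Slt: "S l t"
  shows "\<not> has_collision I D S l t"
proof
  assume "has_collision I D S l t"
  then obtain \<phi> where ph: "\<phi> \<in> I l" and all: "\<forall>l'\<in>\<phi>. S l' (t + D l l')"
    unfolding has_collision_def by blast
  define C where "C = character I D"
  define P where "P = int (T + C)"
  define q where "q = t div P"
  define r where "r = t mod P"
  define j where "j = nat (q mod int N)"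
  have Ppos: "P > int C" "P \<ge> int T + int C" using T unfolding P_def by auto
  have r0: "0 \<le> r" "r < P" unfolding r_def using Ppos by auto
  have tqr: "t = q*P + r" unfolding q_def r_def by simp
  have jN: "j < N" unfolding j_def using N by (simp add: nat_less_iff)
  have Sl: "r < int T" "B j l r" using Slt unfolding S blk_sched_def C_def[symmetric] P_def[symmetric]
      q_def[symmetric] r_def[symmetric] j_def[symmetric] by auto
  have "\<forall>l'\<in>\<phi>. 0 \<le> r + D l l' \<and> r + D l l' \<le> int T - 1 \<and> B j l' (r + D l l')"
  proof
    fix l' assume l': "l' \<in> \<phi>"
    define d where "d = D l l'"
    have db: "\<bar>d\<bar> \<le> int C" unfolding d_def C_def using char_bound[of \<phi> I l l' D] ph l' by simp
    have S': "(t + d) mod P < int T" "B (nat (((t+d) div P) mod int N)) l' ((t+d) mod P)"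
      using all l' unfolding S blk_sched_def C_def[symmetric] P_def[symmetric] d_def by auto
    have lo: "0 \<le> r + d"
    proof (rule ccontr)
      assume "\<not> 0 \<le> r + d"
      hence "t + d = (q - 1) * P + (r + d + P)" "0 \<le> r + d + P" "r + d + P < P"
        using tqr db r0 Ppos by (auto simp: algebra_simps)
      hence "(t+d) mod P = r + d + P" using divmod_int_char by blast
      thus False using S' db r0 Ppos \<open>\<not> 0 \<le> r + d\<close> by linarith
    qed
    have hi: "r + d < int T"
    proof (rule ccontr)
      assume "\<not> r + d < int T"
      hence "t + d = q * P + (r + d)" "0 \<le> r + d" "r + d < P"
        using tqr db Sl Ppos by (auto simp: algebra_simps)
      hence "(t+d) mod P = r + d" using divmod_int_char by blast
      thus False using S' \<open>\<not> r + d < int T\<close> by linarith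
    qed
    have "t + d = q * P + (r + d)" "r + d < P" using tqr hi Ppos by auto
    hence "(t+d) div P = q" "(t+d) mod P = r + d" using divmod_int_char lo by blast+
    hence "B j l' (r + d)" using S' unfolding j_def by simp
    thus "0 \<le> r + D l l' \<and> r + D l l' \<le> int T - 1 \<and> B j l' (r + D l l')"
      using lo hi unfolding d_def by auto
  qed
  hence "\<exists>l t \<phi>. 0 \<le> t \<and> t < int T \<and> B j l t \<and> \<phi> \<in> I l \<and>
          (\<forall>l'\<in>\<phi>. 0 \<le> t + D l l' \<and> t + D l l' \<le> int T - 1 \<and> B j l' (t + D l l'))"
    using r0 Sl ph by blast
  thus False using ind[OF jN] unfolding indep_set_def by blast
qed

lemma periodic_sum:
  fixes f :: "nat \<Rightarrow> real"
  assumes per: "\<And>t. f (t + p) = f t"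
  shows "(\<Sum>t<q*p + r. f t) = real q * (\<Sum>t<p. f t) + (\<Sum>t<r. f t)"
proof (induction q)
  case 0 then show ?case by simp
next
  case (Suc q)
  have "(\<Sum>t<Suc q*p + r. f t) = (\<Sum>t<p + (q*p+r). f t)" by (simp add: add.assoc)
  also have "\<dots> = (\<Sum>t<p. f t) + (\<Sum>t\<in>{p..<p+(q*p+r)}. f t)"
    by (simp add: sum.atLeastLessThan_concat[symmetric] lessThan_atLeast0 sum.atLeastLessThan_concat)
  also have "(\<Sum>t\<in>{p..<p+(q*p+r)}. f t) = (\<Sum>t<q*p+r. f t)"
  proof -
    have "(\<Sum>t\<in>{0+p..<(q*p+r)+p}. f t) = (\<Sum>t\<in>{0..<q*p+r}. f (t+p))"
      by (rule sum.shift_bounds_nat_ivl)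
    thus ?thesis using per by (simp add: add.commute lessThan_atLeast0)
  qed
  finally show ?case using Suc by (simp add: algebra_simps)
qed

lemma periodic_avg:
  fixes f :: "nat \<Rightarrow> real"
  assumes p: "p > 0" and per: "\<And>t. f (t + p) = f t" and bnd: "\<And>t. 0 \<le> f t \<and> f t \<le> 1"
  shows "(\<lambda>n. (\<Sum>t<n. f t) / real n) \<longlonglongrightarrow> (\<Sum>t<p. f t) / real p"
proof -
  let ?s = "(\<Sum>t<p. f t)"
  have sb: "0 \<le> (\<Sum>t<r. f t) \<and> (\<Sum>t<r. f t) \<le> real r" for r
  proof -
    have "(\<Sum>t<r. f t) \<le> (\<Sum>t<r. 1)" using bnd by (intro sum_mono) auto
    moreover have "0 \<le> (\<Sum>t<r. f t)" using bnd by (intro sum_nonneg) auto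
    ultimately show ?thesis by simp
  qed
  have key: "norm ((\<Sum>t<n. f t) / real n - ?s / real p) \<le> 2 * real p / real n" if n: "n \<ge> 1" for n
  proof -
    define q r where "q = n div p" and "r = n mod p"
    have nqr: "n = q*p + r" unfolding q_def r_def by simp
    have rp: "r < p" unfolding r_def using p by simp
    have an: "(\<Sum>t<n. f t) = real q * ?s + (\<Sum>t<r. f t)"
      using periodic_sum[of f p q r, OF per] nqr by simp
    have rn: "real n = real q * real p + real r" using nqr by simp
    have np: "real n > 0" "real p > 0" using n p by auto
    have "(\<Sum>t<n. f t) / real n - ?s / real p
        = (real p * (\<Sum>t<r. f t) - ?s * real r) / (real n * real p)"
      using np unfolding an rn by (simp add: field_simps)
    moreover have "\<bar>real p * (\<Sum>t<r. f t) - ?s * real r\<bar> \<le> 2 * real p * real p"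
    proof -
      have "real p * (\<Sum>t<r. f t) \<le> real p * real p" using sb[of r] rp
        by (intro mult_left_mono) auto
      moreover have "?s * real r \<le> real p * real p" using sb[of p] rp
        by (intro mult_mono) auto
      moreover have "0 \<le> real p * (\<Sum>t<r. f t)" "0 \<le> ?s * real r" using sb by auto
      ultimately show ?thesis by linarith
    qed
    ultimately have A: "norm ((\<Sum>t<n. f t) / real n - ?s / real p)
        = \<bar>real p * (\<Sum>t<r. f t) - ?s * real r\<bar> / (real n * real p)"
      and B: "\<bar>real p * (\<Sum>t<r. f t) - ?s * real r\<bar> \<le> 2 * real p * real p"
      using np by (simp_all add: abs_divide)
    have "\<bar>real p * (\<Sum>t<r. f t) - ?s * real r\<bar> / (real n * real p) \<le> 2 * real p * real p / (real n * real p)"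
      using B np by (intro divide_right_mono) auto
    also have "\<dots> = 2 * real p / real n" using np by (simp add: field_simps)
    finally show ?thesis using A by simp
  qed
  have "(\<lambda>n. (\<Sum>t<n. f t) / real n - ?s / real p) \<longlonglongrightarrow> 0"
  proof (rule Lim_null_comparison)
    show "\<forall>\<^sub>F n in sequentially. norm ((\<Sum>t<n. f t) / real n - ?s / real p) \<le> 2 * real p / real n"
      using key by (intro eventually_sequentiallyI[of 1]) auto
    show "(\<lambda>n. 2 * real p / real n) \<longlonglongrightarrow> 0" by (rule lim_const_over_n)
  qed
  thus ?thesis by (simp add: LIM_zero_iff)
qed


lemma sum_int_range:
  "(\<Sum>t\<in>{0..<int T}. g t) = (\<Sum>t<T. g (int t))"
proof -
  have "{0..<int T} = int ` {..<T}" by (auto simp: image_iff intro!: bexI[of _ "nat _"])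
  thus ?thesis by (simp add: sum.reindex)
qed

lemma blk_rate:
  fixes I :: "'l::finite \<Rightarrow> 'l set set"
  assumes net: "network I" and T: "T \<ge> 1" and N: "N \<ge> 1"
    and ind: "\<And>j. j < N \<Longrightarrow> indep_set I D T (B j)"
    and S: "S = blk_sched T (character I D) N B"
  shows "avg_rate I D S l \<longlonglongrightarrow>
     (\<Sum>j<N. \<Sum>t\<in>{0..<int T}. if B j l t then 1 else 0) / (real N * real (T + character I D))"
proof -
  define C where "C = character I D"
  define P where "P = T + C"
  define f where "f t = (if S l (int t) then 1 else (0::real))" for t
  have av: "avg_rate I D S l = (\<lambda>n. (\<Sum>t<n. f t) / real n)"
  proof
    fix n
    have "(\<Sum>t<n. if S l (int t) \<and> \<not> has_collision I D S l (int t) then 1 else 0) = (\<Sum>t<n. f t)"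
      unfolding f_def using blk_no_coll[OF net T N ind S] by (intro sum.cong) auto
    thus "avg_rate I D S l n = (\<Sum>t<n. f t) / real n" unfolding avg_rate_def by simp
  qed
  have Ppos: "P > 0" using T unfolding P_def by simp
  have fS: "f t = (if int (t mod P) < int T \<and> B ((t div P) mod N) l (int (t mod P)) then 1 else 0)" for t
  proof -
    have e1: "int t div int P mod int N = int (t div P mod N)" by (simp add: zdiv_int zmod_int)
    have e2: "int t mod int P = int (t mod P)" by (simp add: zmod_int)
    show ?thesis unfolding f_def S blk_sched_def C_def[symmetric] P_def[symmetric] of_nat_add[symmetric]
      e1 e2 nat_int by simp
  qed
  have per: "f (t + N*P) = f t" for t
  proof -
    have "(t + N*P) mod P = t mod P" by simp
    moreover have "(t + N*P) div P = t div P + N" using Ppos by simp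
    ultimately show ?thesis unfolding fS by simp
  qed
  have lim: "(\<lambda>n. (\<Sum>t<n. f t) / real n) \<longlonglongrightarrow> (\<Sum>t<N*P. f t) / real (N*P)"
    using N Ppos per by (intro periodic_avg) (auto simp: f_def)
  have "(\<Sum>t<N*P. f t) = (\<Sum>j<N. \<Sum>t\<in>{j*P..<j*P+P}. f t)"
    by (rule sum.nat_group[symmetric])
  also have "\<dots> = (\<Sum>j<N. \<Sum>t\<in>{0..<int T}. if B j l t then 1 else 0)"
  proof (rule sum.cong[OF refl])
    fix j assume j: "j \<in> {..<N}"
    have "(\<Sum>t\<in>{j*P..<j*P+P}. f t) = (\<Sum>r\<in>{0..<P}. f (r + j*P))"
      using sum.shift_bounds_nat_ivl[of f 0 "j*P" P] by (simp add: add.commute)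
    also have "\<dots> = (\<Sum>r\<in>{0..<P}. if r < T then (if B j l (int r) then 1 else 0) else 0)"
    proof (rule sum.cong[OF refl])
      fix r assume r: "r \<in> {0..<P}"
      have "(r + j*P) mod P = r" "(r + j*P) div P = j" using r Ppos by auto
      thus "f (r + j*P) = (if r < T then (if B j l (int r) then 1 else 0) else 0)"
        unfolding fS using j by simp
    qed
    also have "\<dots> = (\<Sum>r\<in>{0..<T}. if B j l (int r) then 1 else 0)"
      unfolding P_def by (rule sum.mono_neutral_cong_right) auto
    also have "\<dots> = (\<Sum>t\<in>{0..<int T}. if B j l t then 1 else 0)"
      by (simp add: sum_int_range atLeast0LessThan)
    finally show "(\<Sum>t\<in>{j*P..<j*P+P}. f t) = (\<Sum>t\<in>{0..<int T}. if B j l t then 1 else 0)" .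
  qed
  finally show ?thesis using lim unfolding av P_def C_def by simp
qed


lemma indep_rate_comp: "indep_rate T A $ l = (\<Sum>t\<in>{0..<int T}. if A l t then 1 else 0) / real T"
  by (simp add: indep_rate_def)

lemma indep_rate_bounds: "0 \<le> indep_rate T A $ l \<and> indep_rate T A $ l \<le> 1"
proof -
  have "(\<Sum>t\<in>{0..<int T}. if A l t then 1 else 0) \<le> (\<Sum>t\<in>{0..<int T}. (1::real))"
    by (intro sum_mono) auto
  moreover have "0 \<le> (\<Sum>t\<in>{0..<int T}. if A l t then 1 else (0::real))" by (intro sum_nonneg) auto
  ultimately show ?thesis unfolding indep_rate_comp
    by (cases "T = 0") (auto simp: divide_le_eq)
qed

lemma empty_indep: "indep_set I D T (\<lambda>l t. False)" "indep_rate T (\<lambda>l t. False) = 0"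
  by (auto simp: indep_set_def indep_rate_def vec_eq_iff)

lemma hull_achievable:
  fixes I :: "'l::finite \<Rightarrow> 'l set set"
  assumes net: "network I" and T: "T \<ge> 1" and x: "x \<in> indep_hull I D T"
  shows "achievable I D ((real T / real (T + character I D)) *\<^sub>R x)"
proof -
  define C where "C = character I D"
  define c where "c = real T / real (T + C)"
  define PT where "PT = {indep_rate T A | A. indep_set I D T A}"
  have c01: "0 < c" "c \<le> 1" using T unfolding c_def by auto
  obtain F u where F: "finite F" "F \<subseteq> PT" and u: "\<forall>v\<in>F. 0 \<le> u v" "sum u F = 1"
    and xs: "(\<Sum>v\<in>F. u v *\<^sub>R v) = x"
    using x unfolding indep_hull_def convex_hull_explicit PT_def by blast
  have vb: "0 \<le> v $ l \<and> v $ l \<le> 1" if "v \<in> PT" for v l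
    using that indep_rate_bounds unfolding PT_def by blast
  have xl: "x $ l = (\<Sum>v\<in>F. u v * v $ l)" for l unfolding xs[symmetric] by simp
  have x0: "0 \<le> x $ l" for l unfolding xl using u F vb by (intro sum_nonneg) auto
  show ?thesis unfolding achievable_def C_def[symmetric] c_def[symmetric]
  proof (intro conjI allI impI)
    fix l show "0 \<le> (c *\<^sub>R x) $ l" using x0 c01 by simp
  next
    fix \<epsilon> :: real assume e: "\<epsilon> > 0"
    define N where "N = nat \<lceil>real (card F) / \<epsilon>\<rceil> + 1"
    have N1: "N \<ge> 1" unfolding N_def by simp
    have NF: "real (card F) / real N < \<epsilon>"
    proof -
      have "real (card F) / \<epsilon> < real N" unfolding N_def by linarith
      hence "real (card F) < real N * \<epsilon>" using e by (simp add: divide_less_eq mult.commute)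
      thus ?thesis using N1 by (simp add: divide_less_eq mult.commute)
    qed
    define k where "k v = nat \<lfloor>real N * u v\<rfloor>" for v
    have kreal: "real (k v) = real_of_int \<lfloor>real N * u v\<rfloor>" if "v \<in> F" for v
    proof -
      have "0 \<le> \<lfloor>real N * u v\<rfloor>" using u that by simp
      thus ?thesis unfolding k_def by simp
    qed
    have kle: "real (k v) \<le> real N * u v" if "v \<in> F" for v
      using kreal[OF that] of_int_floor_le[of "real N * u v"] by linarith
    have kge: "real (k v) \<ge> real N * u v - 1" if "v \<in> F" for v
      using kreal[OF that] real_of_int_floor_gt_diff_one[of "real N * u v"] by linarith
    have ksum: "(\<Sum>v\<in>F. k v) \<le> N"
    proof -
      have "real (\<Sum>v\<in>F. k v) = (\<Sum>v\<in>F. real (k v))" by simp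
      also have "\<dots> \<le> (\<Sum>v\<in>F. real N * u v)" using kle by (intro sum_mono) auto
      also have "\<dots> = real N" using u by (simp add: sum_distrib_left[symmetric])
      finally show ?thesis by (simp only: of_nat_le_iff)
    qed
    obtain ys where ys: "set ys = F" "distinct ys" using finite_distinct_list[OF F(1)] by blast
    define L where "L = concat (map (\<lambda>v. replicate (k v) v) ys) @ replicate (N - (\<Sum>v\<in>F. k v)) 0"
    have lenL: "length L = N"
    proof -
      have "length (concat (map (\<lambda>v. replicate (k v) v) ys)) = sum_list (map k ys)"
        by (induction ys) auto
      also have "\<dots> = (\<Sum>v\<in>F. k v)" using ys by (simp add: sum_list_distinct_conv_sum_set)
      finally show ?thesis unfolding L_def using ksum by simp
    qed
    have zPT: "0 \<in> PT"
    proof -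
      have "indep_rate T (\<lambda>l t. False) \<in> PT" unfolding PT_def using empty_indep(1)[of I D T] by blast
      thus ?thesis by (simp add: empty_indep(2))
    qed
    have setL: "set L \<subseteq> PT" unfolding L_def using F ys zPT by auto
    have sumL: "sum_list (map (\<lambda>w. w $ l) L) = (\<Sum>v\<in>F. real (k v) * v $ l)" for l
    proof -
      have "sum_list (map (\<lambda>w. w $ l) (concat (map (\<lambda>v. replicate (k v) v) ys)))
          = sum_list (map (\<lambda>v. real (k v) * v $ l) ys)"
        by (induction ys) (auto simp: sum_list_replicate)
      also have "\<dots> = (\<Sum>v\<in>F. real (k v) * v $ l)" using ys by (simp add: sum_list_distinct_conv_sum_set)
      finally show ?thesis unfolding L_def by (simp add: sum_list_replicate)
    qed
    define B where "B j = (SOME A. indep_set I D T A \<and> indep_rate T A = L ! j)" for j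
    have B: "indep_set I D T (B j) \<and> indep_rate T (B j) = L ! j" if "j < N" for j
    proof -
      have "L ! j \<in> PT" using setL that lenL by auto
      then obtain A where "indep_set I D T A \<and> indep_rate T A = L ! j" unfolding PT_def by auto
      thus ?thesis unfolding B_def by (rule someI[of "\<lambda>A. indep_set I D T A \<and> indep_rate T A = L ! j"])
    qed
    define S where "S = blk_sched T C N B"
    have lim: "avg_rate I D S l \<longlonglongrightarrow> c * ((\<Sum>v\<in>F. real (k v) * v $ l) / real N)" for l
    proof -
      have "avg_rate I D S l \<longlonglongrightarrow>
         (\<Sum>j<N. \<Sum>t\<in>{0..<int T}. if B j l t then 1 else 0) / (real N * real (T + C))"
      proof -
        have indB: "\<And>j. j < N \<Longrightarrow> indep_set I D T (B j)" using B by blast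
        show ?thesis using blk_rate[OF net T N1 indB S_def[unfolded C_def], of l] unfolding C_def .
      qed
      moreover have "(\<Sum>j<N. \<Sum>t\<in>{0..<int T}. if B j l t then 1 else 0) = real T * (\<Sum>j<N. (L ! j) $ l)"
      proof -
        have "(\<Sum>t\<in>{0..<int T}. if B j l t then 1 else 0) = real T * (L ! j) $ l" if "j < N" for j
          using B[OF that] indep_rate_comp[of T "B j" l] T by (simp add: field_simps)
        thus ?thesis by (simp add: sum_distrib_left)
      qed
      moreover have "(\<Sum>j<N. (L ! j) $ l) = (\<Sum>v\<in>F. real (k v) * v $ l)"
        using sumL[of l] sum_list_sum_nth[of "map (\<lambda>w. w $ l) L"] lenL
        by (simp add: atLeast0LessThan)
      ultimately show ?thesis unfolding c_def by (simp add: field_simps)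
    qed
    show "\<exists>S. (\<forall>l. convergent (avg_rate I D S l)) \<and> (\<forall>l. (c *\<^sub>R x) $ l - \<epsilon> \<le> lim (avg_rate I D S l))"
    proof (intro exI[of _ S] conjI allI)
      fix l
      show "convergent (avg_rate I D S l)" using lim[of l] by (auto simp: convergent_def)
      have "x $ l - real (card F) / real N \<le> (\<Sum>v\<in>F. real (k v) * v $ l) / real N"
      proof -
        have "(\<Sum>v\<in>F. real N * u v * v $ l - 1) \<le> (\<Sum>v\<in>F. real (k v) * v $ l)"
        proof (intro sum_mono)
          fix v assume v: "v \<in> F"
          have "(real N * u v - 1) * v $ l \<le> real (k v) * v $ l"
            using kge[OF v] vb[of v l] v F by (intro mult_right_mono) auto
          moreover have "real N * u v * v $ l - 1 \<le> (real N * u v - 1) * v $ l"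
            using vb[of v l] v F by (auto simp: algebra_simps)
          ultimately show "real N * u v * v $ l - 1 \<le> real (k v) * v $ l" by linarith
        qed
        moreover have "(\<Sum>v\<in>F. real N * u v * v $ l - 1) = real N * x $ l - real (card F)"
          unfolding xl by (simp add: sum_subtractf sum_distrib_left mult.assoc)
        ultimately have le: "real N * x $ l - real (card F) \<le> (\<Sum>v\<in>F. real (k v) * v $ l)" by linarith
        have "x $ l - real (card F) / real N = (real N * x $ l - real (card F)) / real N"
          using N1 by (simp add: field_simps)
        also have "\<dots> \<le> (\<Sum>v\<in>F. real (k v) * v $ l) / real N"
          using le N1 by (intro divide_right_mono) auto
        finally show ?thesis .
      qed
      hence "c * (x $ l - real (card F) / real N) \<le> c * ((\<Sum>v\<in>F. real (k v) * v $ l) / real N)"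
        using c01 by (intro mult_left_mono) auto
      moreover have "c * (real (card F) / real N) \<le> \<epsilon>"
      proof -
        have "c * (real (card F) / real N) \<le> 1 * (real (card F) / real N)"
          using c01 by (intro mult_right_mono) auto
        thus ?thesis using NF by linarith
      qed
      ultimately show "(c *\<^sub>R x) $ l - \<epsilon> \<le> lim (avg_rate I D S l)"
        using limI[OF lim[of l]] by (simp add: right_diff_distrib)
    qed
  qed
qed


lemma comp_dist: fixes y R :: "real ^ 'l" shows "\<bar>y $ l - R $ l\<bar> \<le> dist y R"
proof -
  have "\<bar>(y - R) $ l\<bar> \<le> norm (y - R)" by (rule component_le_norm_cart)
  thus ?thesis by (simp add: dist_norm)
qed

lemma rr_closed:
  fixes I :: "'l::finite \<Rightarrow> 'l set set"
  assumes R: "R \<in> closure (rate_region I D)"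
  shows "R \<in> rate_region I D"
proof -
  have appr: "\<exists>y\<in>rate_region I D. dist y R < e" if "e > 0" for e
    using R that unfolding closure_approachable by blast
  have "achievable I D R" unfolding achievable_def
  proof (intro conjI allI impI)
    fix l show "0 \<le> R $ l"
    proof (rule ccontr)
      assume "\<not> 0 \<le> R $ l"
      then obtain y where y: "y \<in> rate_region I D" "dist y R < - R $ l" using appr[of "- R $ l"] by auto
      have "0 \<le> y $ l" using y(1) unfolding rate_region_def achievable_def by auto
      thus False using y(2) comp_dist[of y l R] by linarith
    qed
  next
    fix \<epsilon> :: real assume e: "\<epsilon> > 0"
    obtain y where y: "y \<in> rate_region I D" "dist y R < \<epsilon>/2" using appr[of "\<epsilon>/2"] e by auto
    have "achievable I D y" using y(1) by (simp add: rate_region_def)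
    hence "\<exists>S. (\<forall>l. convergent (avg_rate I D S l)) \<and> (\<forall>l. y $ l - \<epsilon>/2 \<le> lim (avg_rate I D S l))"
      unfolding achievable_def using e by simp
    then obtain S where S: "\<forall>l. convergent (avg_rate I D S l)" "\<forall>l. y $ l - \<epsilon>/2 \<le> lim (avg_rate I D S l)"
      by blast
    show "\<exists>S. (\<forall>l. convergent (avg_rate I D S l)) \<and> (\<forall>l. R $ l - \<epsilon> \<le> lim (avg_rate I D S l))"
    proof (intro exI[of _ S] conjI allI)
      fix l show "convergent (avg_rate I D S l)" using S by blast
      show "R $ l - \<epsilon> \<le> lim (avg_rate I D S l)" using S(2)[rule_format, of l] comp_dist[of y l R] y(2) by linarith
    qed
  qed
  thus ?thesis unfolding rate_region_def by simp
qed

definition zero_at :: "'l \<Rightarrow> real ^ 'l \<Rightarrow> real ^ 'l" where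
  "zero_at l w = (\<chi> i. if i = l then 0 else w $ i)"

lemma linear_zero_at: "linear (zero_at l)"
  by (rule linearI) (auto simp: zero_at_def vec_eq_iff)

lemma zero_at_hull:
  fixes I :: "'l::finite \<Rightarrow> 'l set set"
  assumes "w \<in> indep_hull I D T"
  shows "zero_at l w \<in> indep_hull I D T"
proof -
  define PT where "PT = {indep_rate T A | A. indep_set I D T A}"
  have sub: "zero_at l ` PT \<subseteq> PT"
  proof
    fix v assume "v \<in> zero_at l ` PT"
    then obtain A where A: "indep_set I D T A" "v = zero_at l (indep_rate T A)" unfolding PT_def by auto
    define A' where "A' i t = (i \<noteq> l \<and> A i t)" for i t
    have "indep_set I D T A'" using A(1) unfolding indep_set_def A'_def by blast
    moreover have "indep_rate T A' = v" unfolding A(2) A'_def zero_at_def indep_rate_def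
      by (auto simp: vec_eq_iff)
    ultimately show "v \<in> PT" unfolding PT_def by blast
  qed
  have "zero_at l w \<in> zero_at l ` indep_hull I D T" using assms by blast
  also have "\<dots> = convex hull (zero_at l ` PT)"
    unfolding indep_hull_def PT_def by (rule convex_hull_linear_image[OF linear_zero_at])
  also have "\<dots> \<subseteq> convex hull PT" using sub by (rule hull_mono)
  finally show ?thesis unfolding indep_hull_def PT_def .
qed

lemma scale_hull:
  fixes I :: "'l::finite \<Rightarrow> 'l set set"
  assumes "w \<in> indep_hull I D T" "0 \<le> a" "a \<le> 1"
  shows "(\<chi> i. if i = l then a * w $ i else w $ i) \<in> indep_hull I D T"
proof -
  have "a *\<^sub>R w + (1 - a) *\<^sub>R zero_at l w \<in> indep_hull I D T"
    unfolding indep_hull_def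
    using assms zero_at_hull[OF assms(1), of l] unfolding indep_hull_def
    by (intro convexD[OF convex_convex_hull]) auto
  moreover have "a *\<^sub>R w + (1 - a) *\<^sub>R zero_at l w = (\<chi> i. if i = l then a * w $ i else w $ i)"
    by (auto simp: vec_eq_iff zero_at_def algebra_simps)
  ultimately show ?thesis by simp
qed

lemma scale_many:
  fixes I :: "'l::finite \<Rightarrow> 'l set set"
  assumes "finite K"
  shows "\<forall>w\<in>indep_hull I D T. \<forall>t. (\<forall>i. 0 \<le> t i \<and> t i \<le> 1) \<longrightarrow>
           (\<chi> i. if i \<in> K then t i * w $ i else w $ i) \<in> indep_hull I D T"
  using assms
proof (induction K rule: finite_induct)
  case empty then show ?case by simp
next
  case (insert k K)
  show ?case
  proof (intro ballI allI impI)
    fix w :: "real ^ 'l" and t :: "'l \<Rightarrow> real" assume w: "w \<in> indep_hull I D T" and t: "\<forall>i. 0 \<le> t i \<and> t i \<le> 1"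
    define v where "v = (\<chi> i. if i \<in> K then t i * w $ i else w $ i)"
    have v: "v \<in> indep_hull I D T" using insert.IH w t unfolding v_def by blast
    have "(\<chi> i. if i = k then t k * v $ i else v $ i) \<in> indep_hull I D T"
      using scale_hull[OF v] t by blast
    moreover have "(\<chi> i. if i = k then t k * v $ i else v $ i) = (\<chi> i. if i \<in> insert k K then t i * w $ i else w $ i)"
      using insert.hyps unfolding v_def by (auto simp: vec_eq_iff)
    ultimately show "(\<chi> i. if i \<in> insert k K then t i * w $ i else w $ i) \<in> indep_hull I D T" by simp
  qed
qed

lemma hull_down:
  fixes I :: "'l::finite \<Rightarrow> 'l set set"
  assumes x: "x \<in> indep_hull I D T" and z: "\<forall>l. 0 \<le> z $ l \<and> z $ l \<le> x $ l"
  shows "z \<in> indep_hull I D T"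
proof -
  define t where "t i = (if x $ i = 0 then 0 else z $ i / x $ i)" for i
  have t: "\<forall>i. 0 \<le> t i \<and> t i \<le> 1"
  proof
    fix i
    have a: "0 \<le> z $ i" "z $ i \<le> x $ i" using z by auto
    show "0 \<le> t i \<and> t i \<le> 1"
    proof (cases "x $ i = 0")
      case True thus ?thesis unfolding t_def by simp
    next
      case False
      hence "x $ i > 0" using a by linarith
      thus ?thesis unfolding t_def using a False by (auto simp: divide_le_eq_1)
    qed
  qed
  have "(\<chi> i. if i \<in> UNIV then t i * x $ i else x $ i) \<in> indep_hull I D T"
    using scale_many[of UNIV I D T, OF finite_class.finite_UNIV] x t by blast
  moreover have "(\<chi> i. if i \<in> UNIV then t i * x $ i else x $ i) = z"
  proof -
    have "t i * x $ i = z $ i" for i using z[rule_format, of i] unfolding t_def by auto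
    thus ?thesis by (simp add: vec_eq_iff)
  qed
  ultimately show ?thesis by simp
qed



lemma cT_lim: "(\<lambda>T. real T / real (T + C)) \<longlonglongrightarrow> 1"
proof -
  have "(\<lambda>T. real T / real (T + C) - 1) \<longlonglongrightarrow> 0"
  proof (rule Lim_null_comparison)
    show "\<forall>\<^sub>F T in sequentially. norm (real T / real (T + C) - 1) \<le> real C / real T"
    proof (intro eventually_sequentiallyI[of 1])
      fix T :: nat assume T: "1 \<le> T"
      have "real T / real (T + C) - 1 = - (real C / real (T + C))" using T by (simp add: field_simps)
      moreover have "real C / real (T + C) \<le> real C / real T" using T
        by (intro divide_left_mono) auto
      moreover have "0 \<le> real C / real (T + C)" by simp
      ultimately show "norm (real T / real (T + C) - 1) \<le> real C / real T" by simp
    qed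
    show "(\<lambda>T. real C / real T) \<longlonglongrightarrow> 0" by (rule lim_const_over_n)
  qed
  thus ?thesis by (simp add: LIM_zero_iff)
qed

lemma ach_closure:
  fixes I :: "'l::finite \<Rightarrow> 'l set set"
  assumes R: "achievable I D R"
  shows "R \<in> closure (\<Union>T\<in>{1..}. (\<lambda>x. (real T / real (T + character I D)) *\<^sub>R x) ` indep_hull I D T)"
  unfolding closure_approachable
proof (intro allI impI)
  fix e :: real assume e: "e > 0"
  define C where "C = character I D"
  define n where "n = real CARD('l)"
  have n: "n > 0" unfolding n_def by simp
  define \<delta> where "\<delta> = e / (4 * n)"
  have d: "\<delta> > 0" unfolding \<delta>_def using e n by simp
  have R0: "\<forall>l. 0 \<le> R $ l" using R unfolding achievable_def by blast
  obtain S where Sc: "\<forall>l. convergent (avg_rate I D S l)" and Sl: "\<forall>l. R $ l - \<delta> \<le> lim (avg_rate I D S l)"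
    using R d unfolding achievable_def by blast
  have ev1: "\<forall>\<^sub>F T in sequentially. \<forall>l. \<bar>avg_rate I D S l T - lim (avg_rate I D S l)\<bar> < \<delta>"
  proof (rule eventually_all_finite)
    fix l
    have "avg_rate I D S l \<longlonglongrightarrow> lim (avg_rate I D S l)" using Sc convergent_LIMSEQ_iff by blast
    from tendstoD[OF this d] show "\<forall>\<^sub>F T in sequentially. \<bar>avg_rate I D S l T - lim (avg_rate I D S l)\<bar> < \<delta>"
      by (simp add: dist_real_def)
  qed
  have ev2: "\<forall>\<^sub>F T in sequentially. \<forall>l. \<bar>real T / real (T + C) * R $ l - R $ l\<bar> < \<delta>"
  proof (rule eventually_all_finite)
    fix l
    have "(\<lambda>T. real T / real (T + C) * R $ l) \<longlonglongrightarrow> 1 * R $ l"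
      by (intro tendsto_mult cT_lim tendsto_const)
    from tendstoD[OF this d] show "\<forall>\<^sub>F T in sequentially. \<bar>real T / real (T + C) * R $ l - R $ l\<bar> < \<delta>"
      by (simp add: dist_real_def)
  qed
  have "\<forall>\<^sub>F T in sequentially. (\<forall>l. \<bar>avg_rate I D S l T - lim (avg_rate I D S l)\<bar> < \<delta>) \<and>
      (\<forall>l. \<bar>real T / real (T + C) * R $ l - R $ l\<bar> < \<delta>) \<and> T \<ge> 1"
    using ev1 ev2 eventually_ge_at_top[of 1] by (intro eventually_conj)
  then obtain T where T1: "\<forall>l. \<bar>avg_rate I D S l T - lim (avg_rate I D S l)\<bar> < \<delta>"
    and T2: "\<forall>l. \<bar>real T / real (T + C) * R $ l - R $ l\<bar> < \<delta>" and T: "T \<ge> 1"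
    unfolding eventually_sequentially by blast
  define c where "c = real T / real (T + C)"
  have c01: "0 < c" "c \<le> 1" using T unfolding c_def by auto
  define A where "A l t = (0 \<le> t \<and> t < int T \<and> S l t \<and> \<not> has_collision I D S l t)" for l t
  have indA: "indep_set I D T A"
    unfolding indep_set_def
  proof
    assume "\<exists>l t \<phi>. 0 \<le> t \<and> t < int T \<and> A l t \<and> \<phi> \<in> I l \<and>
          (\<forall>l'\<in>\<phi>. 0 \<le> t + D l l' \<and> t + D l l' \<le> int T - 1 \<and> A l' (t + D l l'))"
    then obtain l t \<phi> where "A l t" "\<phi> \<in> I l" "\<forall>l'\<in>\<phi>. A l' (t + D l l')" by blast
    thus False unfolding A_def has_collision_def by blast
  qed
  define x where "x = indep_rate T A"
  have xl: "x $ l = avg_rate I D S l T" for l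
    unfolding x_def indep_rate_comp avg_rate_def sum_int_range A_def by simp
  have x0: "0 \<le> x $ l" for l unfolding x_def using indep_rate_bounds by blast
  have xH: "x \<in> indep_hull I D T" unfolding indep_hull_def x_def using indA
    by (intro hull_inc) blast
  define y where "y = (\<chi> l. min (R $ l) (c * x $ l))"
  have yb: "\<bar>y $ l - R $ l\<bar> \<le> 3 * \<delta>" for l
  proof -
    have "x $ l \<ge> R $ l - 2 * \<delta>" using xl[of l] T1 Sl by (smt (verit))
    hence "c * x $ l \<ge> c * (R $ l - 2 * \<delta>)" using c01 by (intro mult_left_mono) auto
    moreover have "c * (2 * \<delta>) \<le> 2 * \<delta>" using c01 d by simp
    moreover have "c * R $ l \<ge> R $ l - \<delta>"
    proof -
      have g: "\<bar>a - b\<bar> < \<delta> \<Longrightarrow> b - \<delta> \<le> a" for a b :: real by linarith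
      show ?thesis unfolding c_def by (rule g) (use T2 in blast)
    qed
    ultimately have "c * x $ l \<ge> R $ l - 3 * \<delta>" by (simp add: right_diff_distrib)
    thus ?thesis unfolding y_def using d by auto
  qed
  have "dist y R < e"
  proof -
    have "dist y R = norm (y - R)" by (simp add: dist_norm)
    also have "\<dots> \<le> (\<Sum>i\<in>UNIV. \<bar>(y - R) $ i\<bar>)" by (rule norm_le_l1_cart)
    also have "\<dots> \<le> (\<Sum>i\<in>(UNIV::'l set). 3 * \<delta>)" using yb by (intro sum_mono) simp
    also have "\<dots> = n * (3 * \<delta>)" unfolding n_def by simp
    also have "\<dots> < e" unfolding \<delta>_def using n e by (simp add: field_simps)
    finally show ?thesis .
  qed
  moreover have "y \<in> (\<lambda>x. c *\<^sub>R x) ` indep_hull I D T"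
  proof
    define z where "z = (1 / c) *\<^sub>R y"
    show "y = c *\<^sub>R z" unfolding z_def using c01 by simp
    have "\<forall>l. 0 \<le> z $ l \<and> z $ l \<le> x $ l"
    proof
      fix l
      have "0 \<le> y $ l" "y $ l \<le> c * x $ l" unfolding y_def using R0 x0 c01 by auto
      thus "0 \<le> z $ l \<and> z $ l \<le> x $ l" unfolding z_def using c01 by (auto simp: field_simps)
    qed
    thus "z \<in> indep_hull I D T" using hull_down[OF xH] by blast
  qed
  ultimately show "\<exists>y\<in>\<Union>T\<in>{1..}. (\<lambda>x. (real T / real (T + character I D)) *\<^sub>R x) ` indep_hull I D T. dist y R < e"
    using T unfolding c_def C_def by blast
qed

theorem theorem2:
  fixes I :: "'l::finite \<Rightarrow> 'l set set" and D :: "'l \<Rightarrow> 'l \<Rightarrow> int"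
  assumes "network I"
  shows "rate_region I D =
    closure (\<Union>T\<in>{1..}. (\<lambda>x. (real T / real (T + character I D)) *\<^sub>R x) ` indep_hull I D T)"
proof
  show "rate_region I D \<subseteq> closure (\<Union>T\<in>{1..}. (\<lambda>x. (real T / real (T + character I D)) *\<^sub>R x) ` indep_hull I D T)"
    using ach_closure unfolding rate_region_def by blast
  have "(\<Union>T\<in>{1..}. (\<lambda>x. (real T / real (T + character I D)) *\<^sub>R x) ` indep_hull I D T) \<subseteq> rate_region I D"
    using hull_achievable[OF assms] unfolding rate_region_def by auto
  hence "closure (\<Union>T\<in>{1..}. (\<lambda>x. (real T / real (T + character I D)) *\<^sub>R x) ` indep_hull I D T) \<subseteq> closure (rate_region I D)"
    by (rule closure_mono)
  also have "\<dots> \<subseteq> rate_region I D" using rr_closed by blast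
  finally show "closure (\<Union>T\<in>{1..}. (\<lambda>x. (real T / real (T + character I D)) *\<^sub>R x) ` indep_hull I D T) \<subseteq> rate_region I D" .
qed

end
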